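(* Let $A\in\mathbb{R}^{n\times n}$ be symmetric, let $1\le K<n$, let $\lambda>0$, and let $g\in\mathcal{G}$ with Lipschitz constant $\ell>0$ for $g'$. Set $\rho=3\lambda\ell$ and run the ADMM iteration described in the context from symmetric initial matrices $Y_0,\Lambda_0$. Let $(X^*,Y^*,\Lambda^* )$ be a limit point (the limit of some subsequence) of $\{(X_k,Y_k,\Lambda_k)\}_{k\ge 0}$, and suppose the symmetric matrix $W^*=2A+\rho Y^*-\Lambda^*$ has distinct $K$-th and $(K+1)$-th largest eigenvalues. Let $U^*\in\mathbb{R}^{n\times K}$ have orthonormal columns that are eigenvectors of $W^*$ associated with its $K$ largest eigenvalues. Then $X^*=Y^*=U^*{U^*}^T$, and the KKT conditions of problem $\min_{X\in\mathcal{P}_K}\|A-X\|_F^2+\lambda\sum_{i,j}g(X_{ij})$ hold at $X^*$: $$(2A-\lambda G^* )U^*=U^*\Lambda_d,\qquad {U^*}^TU^*=I_K,$$ for some diagonal matrix $\Lambda_d\in\mathbb{R}^{K\times K}$, where $G^*\in\mathbb{R}^{n\times n}$ is defined by $G^*_{ij}=g'(X^*_{ij})$.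
   Context: $\mathcal{P}_K$ denotes the set of real symmetric $n\times n$ matrices $X$ with $X^2=X$ and $\mathrm{rank}(X)=K$ (rank-$K$ orthogonal projection matrices). $\mathcal{G}$ is the class of functions $g:\mathbb{R}\to\mathbb{R}$ that are continuously differentiable, nonnegative, convex, and whose derivative is Lipschitz: $|g'(x_1)-g'(x_2)|\le \ell|x_1-x_2|$ for all $x_1,x_2$. For matrices, $\langle M,N\rangle=\mathrm{trace}(M^TN)$ and $\|\cdot\|_F$ is the Frobenius norm. The augmented Lagrangian is $$\mathcal{L}_\rho(X,Y,\Lambda)=\|A-X\|_F^2+\lambda\sum_{i,j}g(Y_{ij})+\frac{\rho}{2}\|X-Y\|_F^2+\langle\Lambda,X-Y\rangle .$$ The ADMM iteration is: given $(Y_k,\Lambda_k)$, let $X_{k+1}\in\arg\min_{X\in\mathcal{P}_K}\mathcal{L}_\rho(X,Y_k,\Lambda_k)$, taken to be $\widehat U\widehat U^T$ where the columns of $\widehat U$ are orthonormal eigenvectors for the $K$ largest eigenvalues of $W_k=2A+\rho Y_k-\Lambda_k$; then $Y_{k+1}=\arg\min_{Y\in\mathbb{R}^{n\times n}}\mathcal{L}_\rho(X_{k+1},Y,\Lambda_k)$ (unique, by strong convexity); then $\Lambda_{k+1}=\Lambda_k+\rho(X_{k+1}-Y_{k+1})$. *)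

theory Defs
  imports "HOL-Analysis.Analysis" "HOL-Library.Multiset"
begin

definition sym_mat :: "real^'n^'n \<Rightarrow> bool" where
  "sym_mat M \<longleftrightarrow> transpose M = M"

definition frob_inner :: "real^'n^'m \<Rightarrow> real^'n^'m \<Rightarrow> real" where
  "frob_inner M N = (\<Sum>i\<in>UNIV. \<Sum>j\<in>UNIV. M$i$j * N$i$j)"

definition frob_norm_sq :: "real^'n^'m \<Rightarrow> real" where
  "frob_norm_sq M = (\<Sum>i\<in>UNIV. \<Sum>j\<in>UNIV. (M$i$j)^2)"

definition in_class_G :: "(real \<Rightarrow> real) \<Rightarrow> (real \<Rightarrow> real) \<Rightarrow> real \<Rightarrow> bool" where
  "in_class_G g gd l \<longleftrightarrow>
     (\<forall>x. (g has_real_derivative gd x) (at x)) \<and> continuous_on UNIV gd \<and>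
     (\<forall>x. 0 \<le> g x) \<and> convex_on UNIV g \<and>
     (\<forall>x1 x2. \<bar>gd x1 - gd x2\<bar> \<le> l * \<bar>x1 - x2\<bar>)"

definition aug_lag ::
  "real^'n^'n \<Rightarrow> real \<Rightarrow> (real \<Rightarrow> real) \<Rightarrow> real \<Rightarrow> real^'n^'n \<Rightarrow> real^'n^'n \<Rightarrow> real^'n^'n \<Rightarrow> real" where
  "aug_lag A lam g rho X Y Lam =
     frob_norm_sq (A - X) + lam * (\<Sum>i\<in>UNIV. \<Sum>j\<in>UNIV. g (Y$i$j))
     + rho / 2 * frob_norm_sq (X - Y) + frob_inner Lam (X - Y)"

text \<open>Number of eigenvalues (with multiplicity) of a symmetric matrix that are \<ge> t:
  dimension of the span of all eigenvectors with eigenvalue \<ge> t.\<close>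
definition eig_count_ge :: "real^'n^'n \<Rightarrow> real \<Rightarrow> nat" where
  "eig_count_ge W t = dim {v. \<exists>mu. t \<le> mu \<and> W *v v = mu *\<^sub>R v}"

text \<open>k-th largest eigenvalue (k \<ge> 1, counted with multiplicity) of a symmetric matrix.\<close>
definition kth_eig :: "real^'n^'n \<Rightarrow> nat \<Rightarrow> real" where
  "kth_eig W k = Sup {t. k \<le> eig_count_ge W t}"

definition top_eigvecs :: "real^'n^'n \<Rightarrow> real^'k^'n \<Rightarrow> bool" where
  "top_eigvecs W U \<longleftrightarrow>
     transpose U ** U = mat 1 \<and>
     (\<exists>mu :: 'k \<Rightarrow> real.
        (\<forall>j. W *v column j U = mu j *\<^sub>R column j U) \<and>
        image_mset mu (mset_set UNIV) = mset (map (kth_eig W) [1..<CARD('k) + 1]))"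

definition diag_mat :: "real^'k^'k \<Rightarrow> bool" where
  "diag_mat D \<longleftrightarrow> (\<forall>i j. i \<noteq> j \<longrightarrow> D$i$j = 0)"

end

theory Submission
  imports Defs
begin

lemma frob_inner_eq: "frob_inner M N = M \<bullet> N"
  by (simp add: frob_inner_def inner_vec_def)

lemma frob_norm_eq: "frob_norm_sq M = M \<bullet> M"
  by (simp add: frob_norm_sq_def inner_vec_def power2_eq_square)

lemma tU_entry: "(transpose U ** U) $ i $ j = column i U \<bullet> column j (U::real^'k^'n)"
  unfolding matrix_matrix_mult_def inner_vec_def by (simp add: transpose_def column_def)

lemma orthD: "transpose U ** U = mat 1 \<Longrightarrow> column i U \<bullet> column j (U::real^'k^'n) = (if i = j then 1 else 0)"
  using tU_entry[of U i j] by (simp add: mat_def)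

lemma outer_entry: "(U ** transpose U) $ a $ b = (\<Sum>j\<in>UNIV. U$a$j * U$b$j)"
  unfolding matrix_matrix_mult_def by (simp add: transpose_def)

lemma inner_outer: "(M::real^'n^'n) \<bullet> (U ** transpose (U::real^'k^'n)) = (\<Sum>j\<in>UNIV. column j U \<bullet> (M *v column j U))"
proof -
  have "M \<bullet> (U ** transpose U) = (\<Sum>a\<in>UNIV. \<Sum>b\<in>UNIV. \<Sum>j\<in>UNIV. M$a$b * (U$a$j * U$b$j))"
    unfolding inner_vec_def outer_entry by (simp add: sum_distrib_left)
  also have "\<dots> = (\<Sum>a\<in>UNIV. \<Sum>j\<in>UNIV. \<Sum>b\<in>UNIV. M$a$b * (U$a$j * U$b$j))"
    by (rule sum.cong[OF refl], rule sum.swap)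
  also have "\<dots> = (\<Sum>j\<in>UNIV. \<Sum>a\<in>UNIV. \<Sum>b\<in>UNIV. M$a$b * (U$a$j * U$b$j))"
    by (rule sum.swap)
  also have "\<dots> = (\<Sum>j\<in>UNIV. column j U \<bullet> (M *v column j U))"
    unfolding inner_vec_def matrix_vector_mult_def 
    by (simp add: column_def sum_distrib_left mult_ac)
  finally show ?thesis .
qed

lemma Wsym: assumes "transpose W = W" shows "x \<bullet> (W *v y) = (W *v x) \<bullet> (y::real^'n)"
proof -
  have "x \<bullet> (W *v y) = (x v* W) \<bullet> y" by (simp add: dot_lmul_matrix)
  also have "x v* W = W *v x" using vector_transpose_matrix[of x W] assms by simp
  finally show ?thesis .
qed

lemma outer_mv: "(U ** transpose U) *v v = (\<Sum>j\<in>UNIV. (column j U \<bullet> v) *\<^sub>R column j (U::real^'k^'n))"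
proof -
  have "((U ** transpose U) *v v) $ a = (\<Sum>j\<in>UNIV. (column j U \<bullet> v) *\<^sub>R column j (U::real^'k^'n)) $ a" for a
  proof -
    have "((U ** transpose U) *v v) $ a = (\<Sum>b\<in>UNIV. \<Sum>j\<in>UNIV. U$a$j * U$b$j * v$b)"
      unfolding matrix_vector_mult_def outer_entry by (simp add: sum_distrib_right)
    also have "\<dots> = (\<Sum>j\<in>UNIV. \<Sum>b\<in>UNIV. U$a$j * U$b$j * v$b)" by (rule sum.swap)
    also have "\<dots> = (\<Sum>j\<in>UNIV. (column j U \<bullet> v) *\<^sub>R column j (U::real^'k^'n)) $ a"
      unfolding inner_vec_def by (simp add: column_def sum_distrib_left sum_distrib_right mult_ac)
    finally show ?thesis .
  qed
  then show ?thesis by (simp add: vec_eq_iff)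
qed

lemma proj_perp:
  fixes U :: "real^'k^'n"
  assumes "transpose U ** U = mat 1"
  shows "column k U \<bullet> (v - (\<Sum>j\<in>UNIV. (column j U \<bullet> v) *\<^sub>R column j U)) = 0"
proof -
  have "column k U \<bullet> (\<Sum>j\<in>UNIV. (column j U \<bullet> v) *\<^sub>R column j U)
      = (\<Sum>j\<in>UNIV. (column j U \<bullet> v) * (if k = j then 1 else 0))"
    by (simp add: inner_sum_right orthD[OF assms])
  also have "\<dots> = column k U \<bullet> v" by (simp add: if_distrib cong: if_cong)
  finally show ?thesis by (simp add: inner_diff_right)
qed

lemma proj_norm:
  fixes U :: "real^'k^'n"
  assumes "transpose U ** U = mat 1"
  shows "(v - (\<Sum>j\<in>UNIV. (column j U \<bullet> v) *\<^sub>R column j U)) \<bullet> (v - (\<Sum>j\<in>UNIV. (column j U \<bullet> v) *\<^sub>R column j U))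
       = v \<bullet> v - (\<Sum>j\<in>UNIV. (column j U \<bullet> v)^2)"
proof -
  define q where "q = v - (\<Sum>j\<in>UNIV. (column j U \<bullet> v) *\<^sub>R column j U)"
  have p: "(\<Sum>j\<in>UNIV. (column j U \<bullet> v) *\<^sub>R column j U) \<bullet> q = 0"
    unfolding q_def by (simp add: inner_sum_left proj_perp[OF assms])
  have "q \<bullet> q = v \<bullet> q" using p by (simp add: q_def inner_diff_left)
  also have "\<dots> = v \<bullet> v - (\<Sum>j\<in>UNIV. (column j U \<bullet> v)^2)"
    by (simp add: q_def inner_diff_right inner_sum_right power2_eq_square inner_commute)
  finally show ?thesis unfolding q_def .
qed

lemma bessel:
  fixes V :: "real^'k^'n"
  assumes "transpose V ** V = mat 1"
  shows "(\<Sum>i\<in>UNIV. (column i V \<bullet> u)^2) \<le> u \<bullet> u"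
proof -
  have "0 \<le> (u - (\<Sum>j\<in>UNIV. (column j V \<bullet> u) *\<^sub>R column j V)) \<bullet> (u - (\<Sum>j\<in>UNIV. (column j V \<bullet> u) *\<^sub>R column j V))"
    by (rule inner_ge_zero)
  then show ?thesis unfolding proj_norm[OF assms] by simp
qed

lemma vbound:
  fixes W :: "real^'n^'n" and U :: "real^'k^'n"
  assumes symW: "transpose W = W" and oU: "transpose U ** U = mat 1"
    and eig: "\<And>j. W *v column j U = mu j *\<^sub>R column j U"
    and ray: "\<And>x. (\<forall>j. column j U \<bullet> x = 0) \<Longrightarrow> x \<bullet> (W *v x) \<le> c * (x \<bullet> x)"
  shows "v \<bullet> (W *v v) \<le> (\<Sum>j\<in>UNIV. mu j * (column j U \<bullet> v)^2) + c * (v \<bullet> v - (\<Sum>j\<in>UNIV. (column j U \<bullet> v)^2))"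
proof -
  define p where "p = (\<Sum>j\<in>UNIV. (column j U \<bullet> v) *\<^sub>R column j U)"
  define q where "q = v - p"
  have vpq: "v = p + q" by (simp add: q_def)
  have Wp: "W *v p = (\<Sum>j\<in>UNIV. ((column j U \<bullet> v) * mu j) *\<^sub>R column j U)"
    unfolding p_def by (simp add: linear_sum[OF matrix_vector_mul_linear] o_def matrix_vector_mult_scaleR eig)
  have perp: "\<forall>j. column j U \<bullet> q = 0" unfolding q_def p_def using proj_perp[OF oU] by blast
  have qq: "q \<bullet> q = v \<bullet> v - (\<Sum>j\<in>UNIV. (column j U \<bullet> v)^2)"
    unfolding q_def p_def by (rule proj_norm[OF oU])
  have Wpq: "(W *v p) \<bullet> q = 0" unfolding Wp by (simp add: inner_sum_left perp)
  have vWp: "v \<bullet> (W *v p) = (\<Sum>j\<in>UNIV. mu j * (column j U \<bullet> v)^2)"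
    unfolding Wp by (simp add: inner_sum_right power2_eq_square inner_commute mult_ac)
  have vWq: "v \<bullet> (W *v q) = q \<bullet> (W *v q)"
  proof -
    have "v \<bullet> (W *v q) = (W *v v) \<bullet> q" by (rule Wsym[OF symW])
    also have "\<dots> = (W *v p) \<bullet> q + (W *v q) \<bullet> q"
      by (subst vpq, simp add: matrix_vector_right_distrib inner_add_left)
    also have "\<dots> = q \<bullet> (W *v q)" using Wpq by (simp add: inner_commute)
    finally show ?thesis .
  qed
  have "v \<bullet> (W *v v) = v \<bullet> (W *v p) + v \<bullet> (W *v q)"
    by (subst (2) vpq, simp add: matrix_vector_right_distrib inner_add_right)
  also have "\<dots> = (\<Sum>j\<in>UNIV. mu j * (column j U \<bullet> v)^2) + q \<bullet> (W *v q)" using vWp vWq by simp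
  also have "\<dots> \<le> (\<Sum>j\<in>UNIV. mu j * (column j U \<bullet> v)^2) + c * (q \<bullet> q)" using ray[OF perp] by simp
  finally show ?thesis unfolding qq .
qed

lemma kyfan:
  fixes W :: "real^'n^'n" and U V :: "real^'k^'n"
  assumes symW: "transpose W = W" and oU: "transpose U ** U = mat 1" and oV: "transpose V ** V = mat 1"
    and eig: "\<And>j. W *v column j U = mu j *\<^sub>R column j U"
    and ray: "\<And>x. (\<forall>j. column j U \<bullet> x = 0) \<Longrightarrow> x \<bullet> (W *v x) \<le> c * (x \<bullet> x)"
    and dle: "\<And>j. c + d \<le> mu j"
  shows "W \<bullet> (V ** transpose V) + d * (real CARD('k) - (U ** transpose U) \<bullet> (V ** transpose V))
          \<le> W \<bullet> (U ** transpose U)"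
proof -
  define a where "a j = (\<Sum>i\<in>UNIV. (column j U \<bullet> column i V)^2)" for j
  have a1: "a j \<le> 1" for j
  proof -
    have "a j = (\<Sum>i\<in>UNIV. (column i V \<bullet> column j U)^2)" by (simp add: a_def inner_commute)
    also have "\<dots> \<le> column j U \<bullet> column j U" by (rule bessel[OF oV])
    finally show ?thesis using orthD[OF oU, of j j] by simp
  qed
  have vv: "column i V \<bullet> column i V = 1" for i using orthD[OF oV, of i i] by simp
  have "W \<bullet> (V ** transpose V) = (\<Sum>i\<in>UNIV. column i V \<bullet> (W *v column i V))" by (rule inner_outer)
  also have "\<dots> \<le> (\<Sum>i\<in>UNIV. (\<Sum>j\<in>UNIV. mu j * (column j U \<bullet> column i V)^2) + c * (1 - (\<Sum>j\<in>UNIV. (column j U \<bullet> column i V)^2)))"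
  proof (rule sum_mono)
    fix i
    show "column i V \<bullet> (W *v column i V) \<le> (\<Sum>j\<in>UNIV. mu j * (column j U \<bullet> column i V)^2) + c * (1 - (\<Sum>j\<in>UNIV. (column j U \<bullet> column i V)^2))"
      using vbound[OF symW oU eig ray, of "column i V"] vv[of i] by simp
  qed
  also have "\<dots> = (\<Sum>i\<in>UNIV. \<Sum>j\<in>UNIV. mu j * (column j U \<bullet> column i V)^2) + c * (real CARD('k) - (\<Sum>i\<in>UNIV. \<Sum>j\<in>UNIV. (column j U \<bullet> column i V)^2))"
    by (simp add: sum.distrib sum_subtractf right_diff_distrib sum_distrib_left[symmetric])
  also have "(\<Sum>i\<in>UNIV. \<Sum>j\<in>UNIV. mu j * (column j U \<bullet> column i V)^2) = (\<Sum>j\<in>UNIV. mu j * a j)"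
    unfolding a_def sum_distrib_left by (rule sum.swap)
  also have "(\<Sum>i\<in>UNIV. \<Sum>j\<in>UNIV. (column j U \<bullet> column i V)^2) = (\<Sum>j\<in>UNIV. a j)"
    unfolding a_def by (rule sum.swap)
  finally have L1: "W \<bullet> (V ** transpose V) \<le> (\<Sum>j\<in>UNIV. mu j * a j) + c * (real CARD('k) - (\<Sum>j\<in>UNIV. a j))" .
  have PV: "(U ** transpose U) \<bullet> (V ** transpose V) = (\<Sum>j\<in>UNIV. a j)"
  proof -
    have "(U ** transpose U) \<bullet> (V ** transpose V) = (\<Sum>i\<in>UNIV. column i V \<bullet> ((U ** transpose U) *v column i V))"
      by (rule inner_outer)
    also have "\<dots> = (\<Sum>i\<in>UNIV. \<Sum>j\<in>UNIV. (column j U \<bullet> column i V)^2)"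
      by (simp add: outer_mv inner_sum_right power2_eq_square inner_commute)
    also have "\<dots> = (\<Sum>j\<in>UNIV. a j)" unfolding a_def by (rule sum.swap)
    finally show ?thesis .
  qed
  have WU: "W \<bullet> (U ** transpose U) = (\<Sum>j\<in>UNIV. mu j)"
    by (simp add: inner_outer eig orthD[OF oU])
  have K: "real CARD('k) = (\<Sum>j\<in>(UNIV::'k set). 1)" by simp
  have "(\<Sum>j\<in>UNIV. mu j) - ((\<Sum>j\<in>UNIV. mu j * a j) + (c + d) * (real CARD('k) - (\<Sum>j\<in>UNIV. a j)))
        = (\<Sum>j\<in>UNIV. (mu j - c - d) * (1 - a j))"
    unfolding K by (simp add: sum_subtractf sum_distrib_left algebra_simps sum.distrib)
  also have "\<dots> \<ge> 0" using a1 dle by (intro sum_nonneg mult_nonneg_nonneg) (auto simp: algebra_simps)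
  finally show ?thesis using L1 PV WU by (simp add: algebra_simps)
qed

lemma perp_nonzero:
  fixes U :: "real^'k^'n"
  assumes oU: "transpose U ** U = mat 1" and Kn: "CARD('k) < CARD('n)"
  shows "\<exists>y. y \<noteq> 0 \<and> (\<forall>j. column j U \<bullet> y = 0)"
proof -
  define C where "C = range (\<lambda>j. column j U)"
  have "dim (span C) \<le> card C" unfolding dim_span
    by (rule dim_le_card) (auto simp: C_def span_base)
  also have "card C \<le> CARD('k)" unfolding C_def by (rule card_image_le) simp
  finally have "dim (span C) < CARD('n)" using Kn by linarith
  moreover have "dim (UNIV :: (real^'n) set) = CARD('n)" by simp
  ultimately have "span C \<noteq> UNIV" by (metis less_irrefl)
  then obtain x where x: "x \<notin> span C" by auto
  define y where "y = x - (\<Sum>j\<in>UNIV. (column j U \<bullet> x) *\<^sub>R column j U)"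
  have "(\<Sum>j\<in>UNIV. (column j U \<bullet> x) *\<^sub>R column j U) \<in> span C"
    by (intro span_sum span_mul span_base) (auto simp: C_def)
  then have "y \<noteq> 0" using x by (auto simp: y_def)
  moreover have "\<forall>j. column j U \<bullet> y = 0" unfolding y_def using proj_perp[OF oU] by blast
  ultimately show ?thesis by blast
qed

lemma foc_zero:
  fixes a b :: real
  assumes "\<And>s. 2 * s * b + s^2 * a \<le> 0"
  shows "b = 0"
proof -
  define e where "e = \<bar>a\<bar> + 1"
  have e: "e > 0" by (simp add: e_def)
  have "2 * (b/e) * b + (b/e)^2 * a \<le> 0" by (rule assms)
  then have "e^2 * (2 * (b/e) * b + (b/e)^2 * a) \<le> 0"
    by (simp add: mult_nonneg_nonpos)
  also have "e^2 * (2 * (b/e) * b + (b/e)^2 * a) = b^2 * (2*e + a)"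
    using e by (simp add: field_simps power2_eq_square)
  finally have "b^2 * (2*e + a) \<le> 0" .
  moreover have "2*e + a > 0" unfolding e_def by (cases "a \<ge> 0") simp_all
  ultimately have "b^2 \<le> 0" by (simp add: mult_le_0_iff)
  then show ?thesis by simp
qed

lemma max_eig:
  fixes W :: "real^'n^'n" and U :: "real^'k^'n"
  assumes symW: "transpose W = W" and oU: "transpose U ** U = mat 1"
    and eig: "\<And>j. W *v column j U = mu j *\<^sub>R column j U"
    and Kn: "CARD('k) < CARD('n)"
  shows "\<exists>x0 m. (\<forall>j. column j U \<bullet> x0 = 0) \<and> x0 \<bullet> x0 = 1 \<and> W *v x0 = m *\<^sub>R x0 \<and>
           (\<forall>x. (\<forall>j. column j U \<bullet> x = 0) \<longrightarrow> x \<bullet> (W *v x) \<le> m * (x \<bullet> x))"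
proof -
  define S where "S = {x. \<forall>j. column j U \<bullet> x = (0::real)}"
  define T where "T = S \<inter> sphere 0 1"
  define f where "f x = x \<bullet> (W *v x)" for x
  have Sadd: "x + y \<in> S" if "x \<in> S" "y \<in> S" for x y using that by (simp add: S_def inner_add_right)
  have Sscale: "c *\<^sub>R x \<in> S" if "x \<in> S" for x c using that by (simp add: S_def)
  have closedS: "closed S"
  proof -
    have "S = (\<Inter>j. {x. column j U \<bullet> x = 0})" by (auto simp: S_def)
    then show ?thesis by (auto intro!: closed_INT closed_hyperplane)
  qed
  have cT: "compact T" unfolding T_def by (subst Int_commute) (rule compact_Int_closed[OF compact_sphere closedS])
  obtain y where y: "y \<noteq> 0" "\<forall>j. column j U \<bullet> y = 0" using perp_nonzero[OF oU Kn] by blast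
  have "y /\<^sub>R norm y \<in> T" using y by (simp add: T_def S_def)
  then have neT: "T \<noteq> {}" by blast
  have lin: "bounded_linear (\<lambda>x. W *v x)"
    using matrix_vector_mul_linear linear_conv_bounded_linear by blast
  have cf: "continuous_on T f" unfolding f_def
    by (intro continuous_intros linear_continuous_on[OF lin])
  obtain x0 where x0: "x0 \<in> T" "\<And>z. z \<in> T \<Longrightarrow> f z \<le> f x0"
    using continuous_attains_sup[OF cT neT cf] by blast
  define m where "m = f x0"
  have x0S: "x0 \<in> S" and x0n: "x0 \<bullet> x0 = 1" using x0(1) by (auto simp: T_def dot_square_norm)
  have ray: "f z \<le> m * (z \<bullet> z)" if "z \<in> S" for z
  proof (cases "z = 0")
    case True then show ?thesis by (simp add: f_def)
  next
    case False
    define z' where "z' = z /\<^sub>R norm z"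
    have "z' \<in> T" using that False by (simp add: z'_def T_def Sscale)
    then have "f z' \<le> m" using x0(2) by (simp add: m_def)
    moreover have "f z' = f z / (norm z)^2"
      by (simp add: z'_def f_def matrix_vector_mult_scaleR power2_eq_square divide_inverse mult_ac)
    moreover have "z \<bullet> z = (norm z)^2" by (simp add: dot_square_norm)
    moreover have "norm z > 0" using False by simp
    ultimately show ?thesis by (simp add: divide_le_eq mult.commute)
  qed
  have foc: "y \<bullet> (W *v x0) - m * (y \<bullet> x0) = 0" if yS: "y \<in> S" for y
  proof (rule foc_zero[where a = "f y - m * (y \<bullet> y)"])
    fix s :: real
    have "x0 + s *\<^sub>R y \<in> S" using x0S yS by (simp add: Sadd Sscale)
    then have h1: "f (x0 + s *\<^sub>R y) \<le> m * ((x0 + s *\<^sub>R y) \<bullet> (x0 + s *\<^sub>R y))" by (rule ray)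
    have h2: "f (x0 + s *\<^sub>R y) = m + 2 * s * (y \<bullet> (W *v x0)) + s^2 * f y"
    proof -
      have "x0 \<bullet> (W *v y) = y \<bullet> (W *v x0)" using Wsym[OF symW, of x0 y] by (simp add: inner_commute)
      then show ?thesis
        by (simp add: f_def m_def matrix_vector_right_distrib matrix_vector_mult_scaleR inner_add_left inner_add_right power2_eq_square algebra_simps)
    qed
    have h3: "(x0 + s *\<^sub>R y) \<bullet> (x0 + s *\<^sub>R y) = 1 + 2 * s * (y \<bullet> x0) + s^2 * (y \<bullet> y)"
      using x0n by (simp add: inner_add_left inner_add_right power2_eq_square inner_commute algebra_simps)
    have e1: "m * (1 + 2 * s * (y \<bullet> x0) + s^2 * (y \<bullet> y)) = m + 2 * s * (m * (y \<bullet> x0)) + s^2 * (m * (y \<bullet> y))"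
      by (simp add: algebra_simps)
    have e2: "2 * s * (y \<bullet> (W *v x0) - m * (y \<bullet> x0)) + s^2 * (f y - m * (y \<bullet> y))
        = (2 * s * (y \<bullet> (W *v x0)) + s^2 * f y) - (2 * s * (m * (y \<bullet> x0)) + s^2 * (m * (y \<bullet> y)))"
      by (simp add: algebra_simps)
    show "2 * s * (y \<bullet> (W *v x0) - m * (y \<bullet> x0)) + s^2 * (f y - m * (y \<bullet> y)) \<le> 0"
      using h1[unfolded h2 h3 e1] unfolding e2 by linarith
  qed
  define z where "z = W *v x0 - m *\<^sub>R x0"
  have zS: "z \<in> S"
  proof -
    have "column j U \<bullet> (W *v x0) = 0" for j
      using Wsym[OF symW, of "column j U" x0] x0S by (simp add: S_def eig inner_commute)
    then show ?thesis using x0S by (simp add: S_def z_def inner_diff_right)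
  qed
  have "z \<bullet> z = 0" using foc[OF zS] by (simp add: z_def inner_diff_right)
  then have "W *v x0 = m *\<^sub>R x0" by (simp add: z_def)
  then show ?thesis using x0S x0n ray by (auto simp: S_def f_def)
qed

lemma eig_bound:
  fixes W :: "real^'n^'n"
  shows "\<exists>B. \<forall>v mu. v \<noteq> 0 \<longrightarrow> W *v v = mu *\<^sub>R v \<longrightarrow> mu \<le> B"
proof -
  obtain B where B: "B > 0" "\<And>x. norm (W *v x) \<le> B * norm x"
    using linear_bounded_pos[OF matrix_vector_mul_linear] by blast
  have "mu \<le> B" if "v \<noteq> 0" "W *v v = mu *\<^sub>R v" for v mu
  proof -
    have "\<bar>mu\<bar> * norm v \<le> B * norm v" using B(2)[of v] that(2) by simp
    then have "\<bar>mu\<bar> \<le> B" using that(1) by simp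
    then show ?thesis by simp
  qed
  then show ?thesis by blast
qed

lemma cnt_bdd:
  fixes W :: "real^'n^'n"
  assumes "1 \<le> k"
  shows "bdd_above {t. k \<le> eig_count_ge W t}"
proof -
  obtain B where B: "\<And>v mu. v \<noteq> 0 \<Longrightarrow> W *v v = mu *\<^sub>R v \<Longrightarrow> mu \<le> B" using eig_bound[of W] by blast
  have "t \<le> B" if "k \<le> eig_count_ge W t" for t
  proof (rule ccontr)
    assume "\<not> t \<le> B"
    then have "{v. \<exists>mu. t \<le> mu \<and> W *v v = mu *\<^sub>R v} \<subseteq> span {}"
      using B by force
    from dim_le_card[OF this finite.emptyI]
    have "dim {v. \<exists>mu. t \<le> mu \<and> W *v v = mu *\<^sub>R v} = 0" by simp
    then show False using that assms unfolding eig_count_ge_def by linarith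
  qed
  then show ?thesis by (intro bdd_aboveI[of _ B]) auto
qed

lemma cnt_lower:
  fixes W :: "real^'n^'n"
  assumes "B \<subseteq> {v. \<exists>mu. t \<le> mu \<and> W *v v = mu *\<^sub>R v}" "pairwise orthogonal B" "0 \<notin> B"
  shows "card B \<le> eig_count_ge W t"
  unfolding eig_count_ge_def
  by (rule independent_card_le_dim[OF assms(1) pairwise_orthogonal_independent[OF assms(2,3)]])

lemma count_eq:
  fixes mu :: "'k::finite \<Rightarrow> real" and f :: "nat \<Rightarrow> real"
  assumes "image_mset mu (mset_set UNIV) = mset (map f [1..<CARD('k) + 1])"
  shows "card {j. c < mu j} = card {i \<in> {1..<CARD('k)+1}. c < f i}"
proof -
  have "size (filter_mset (\<lambda>x. c < x) (image_mset mu (mset_set UNIV)))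
      = size (filter_mset (\<lambda>x. c < x) (mset (map f [1..<CARD('k) + 1])))" using assms by simp
  moreover have "size (filter_mset (\<lambda>x. c < x) (image_mset mu (mset_set UNIV))) = card {j. c < mu j}"
    by (simp add: filter_mset_image_mset)
  moreover have "size (filter_mset (\<lambda>x. c < x) (mset (map f [1..<CARD('k) + 1])))
      = length (filter (\<lambda>x. c < x) (map f [1..<CARD('k) + 1]))"
    by (metis mset_filter size_mset)
  moreover have "length (filter (\<lambda>x. c < x) (map f [1..<CARD('k) + 1])) = card {i \<in> {1..<CARD('k)+1}. c < f i}"
  proof -
    have "length (filter (\<lambda>x. c < x) (map f [1..<CARD('k) + 1])) = length (filter ((\<lambda>x. c < x) \<circ> f) [1..<CARD('k) + 1])"
      by (simp add: filter_map)
    also have "\<dots> = card ({x. ((\<lambda>x. c < x) \<circ> f) x} \<inter> set [1..<CARD('k) + 1])"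
      by (rule distinct_length_filter) simp
    also have "({x. ((\<lambda>x. c < x) \<circ> f) x} \<inter> set [1..<CARD('k) + 1]) = {i \<in> {1..<CARD('k)+1}. c < f i}"
      by (simp only: set_upt) auto
    finally show ?thesis .
  qed
  ultimately show ?thesis by simp
qed

lemma spectral:
  fixes W :: "real^'n^'n" and U :: "real^'k^'n"
  assumes symW: "transpose W = W" and top: "top_eigvecs W U" and Kn: "CARD('k) < CARD('n)"
  shows "\<exists>mu. (\<forall>j. W *v column j U = mu j *\<^sub>R column j U) \<and>
              (\<forall>j. kth_eig W CARD('k) \<le> mu j) \<and>
              kth_eig W (CARD('k)+1) \<le> kth_eig W CARD('k) \<and>
              (\<forall>x. (\<forall>j. column j U \<bullet> x = 0) \<longrightarrow> x \<bullet> (W *v x) \<le> kth_eig W (CARD('k)+1) * (x \<bullet> x))"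
proof -
  have oU: "transpose U ** U = mat 1" using top by (simp add: top_eigvecs_def)
  obtain mu where eig: "\<And>j. W *v column j U = mu j *\<^sub>R column j U"
    and ms: "image_mset mu (mset_set UNIV) = mset (map (kth_eig W) [1..<CARD('k) + 1])"
    using top unfolding top_eigvecs_def by blast
  obtain x0 m where x0perp: "\<forall>j. column j U \<bullet> x0 = 0" and x0n: "x0 \<bullet> x0 = 1"
    and x0e: "W *v x0 = m *\<^sub>R x0" and ray: "\<forall>x. (\<forall>j. column j U \<bullet> x = 0) \<longrightarrow> x \<bullet> (W *v x) \<le> m * (x \<bullet> x)"
    using max_eig[OF symW oU eig Kn] by blast
  define K where "K = CARD('k)"
  define kth where "kth = kth_eig W"
  define cnt where "cnt = eig_count_ge W"
  have uu: "column i U \<bullet> column j U = (if i = j then 1 else 0)" for i j by (rule orthD[OF oU])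
  have cntJ: "card J + 1 \<le> cnt t" if tm: "t \<le> m" and tJ: "\<forall>j\<in>J. t \<le> mu j" for J t
  proof -
    define B where "B = insert x0 ((\<lambda>j. column j U) ` J)"
    have x0not: "x0 \<notin> (\<lambda>j. column j U) ` J"
    proof
      assume "x0 \<in> (\<lambda>j. column j U) ` J"
      then obtain j where "x0 = column j U" by blast
      then show False using x0perp x0n uu[of j j] by simp
    qed
    have inj: "inj_on (\<lambda>j. column j U) J"
    proof (rule inj_onI)
      fix i j assume "column i U = column j U"
      then have "column i U \<bullet> column j U = 1" using uu[of j j] by simp
      then show "i = j" using uu[of i j] by (simp split: if_splits)
    qed
    have cardB: "card B = card J + 1"
      unfolding B_def using x0not by (simp add: card_image[OF inj])
    have sub: "B \<subseteq> {v. \<exists>mu. t \<le> mu \<and> W *v v = mu *\<^sub>R v}"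
      unfolding B_def using tm tJ x0e eig by auto
    have po: "pairwise orthogonal B"
      unfolding B_def pairwise_def orthogonal_def using x0perp uu
      by (auto simp: inner_commute)
    have z: "0 \<notin> B" unfolding B_def using x0n uu
      by (auto, metis inner_zero_left zero_neq_one)
    show ?thesis using cnt_lower[OF sub po z] cardB by (simp add: cnt_def)
  qed
  define t0 where "t0 = min m (Min (range mu))"
  have "card (UNIV::'k set) + 1 \<le> cnt t0"
    by (rule cntJ) (auto simp: t0_def min.coboundedI2)
  then have t0S: "K + 1 \<le> cnt t0" by (simp add: K_def)
  have bdd: "bdd_above {t. i \<le> cnt t}" if "1 \<le> i" for i using cnt_bdd[OF that] by (simp add: cnt_def)
  have upper: "t \<le> kth i" if "1 \<le> i" "i \<le> cnt t" for i t
    unfolding kth_def kth_eig_def cnt_def[symmetric] by (rule cSup_upper) (use that bdd in auto)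
  have anti: "kth j \<le> kth i" if "1 \<le> i" "i \<le> j" "j \<le> K + 1" for i j
    unfolding kth_def kth_eig_def cnt_def[symmetric]
  proof (rule cSup_subset_mono)
    have "j \<le> cnt t0" using t0S that by simp
    then show "{t. j \<le> cnt t} \<noteq> {}" by blast
    show "bdd_above {t. i \<le> cnt t}" by (rule bdd[OF that(1)])
    show "{t. j \<le> cnt t} \<subseteq> {t. i \<le> cnt t}" using that by auto
  qed
  have K1: "1 \<le> K" by (simp add: K_def Suc_le_eq)
  have murange: "\<exists>i\<in>{1..<K+1}. mu j = kth i" for j
  proof -
    have "mu j \<in> set_mset (image_mset mu (mset_set UNIV))" by simp
    then have "mu j \<in> set (map kth [1..<K + 1])" unfolding ms by (simp add: K_def kth_def)
    then show ?thesis by auto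
  qed
  have muK: "kth K \<le> mu j" for j
  proof -
    obtain i where "i \<in> {1..<K+1}" "mu j = kth i" using murange by blast
    then show ?thesis using anti[of i K] by auto
  qed
  have KK: "kth (K+1) \<le> kth K" using anti[of K "K+1"] K1 by simp
  define c where "c = kth (K+1)"
  have mc: "m \<le> c"
  proof (rule ccontr)
    assume "\<not> m \<le> c"
    then have mgt: "c < m" by simp
    define J where "J = {j. c < mu j}"
    define R where "R = {i \<in> {1..<K+1}. c < kth i}"
    have JR: "card J = card R" unfolding J_def R_def K_def kth_def by (rule count_eq[OF ms])
    have RK: "R \<subseteq> {1..K}" unfolding R_def by auto
    then have rK: "card R \<le> K" using card_mono[OF finite_atLeastAtMost RK] by simp
    have kr: "kth (card R + 1) \<le> c"
    proof (rule ccontr)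
      assume "\<not> kth (card R + 1) \<le> c"
      then have gt: "c < kth (card R + 1)" by simp
      show False
      proof (cases "card R + 1 \<le> K")
        case True
        have "{1..card R + 1} \<subseteq> R"
        proof
          fix i assume "i \<in> {1..card R + 1}"
          then have "1 \<le> i" "i \<le> card R + 1" by auto
          then have "kth (card R + 1) \<le> kth i" using anti[of i "card R + 1"] True by simp
          then show "i \<in> R" using gt \<open>1 \<le> i\<close> \<open>i \<le> card R + 1\<close> True by (auto simp: R_def)
        qed
        from card_mono[OF _ this] have "card R + 1 \<le> card R" unfolding R_def by simp
        then show False by simp
      next
        case False
        then have "card R = K" using rK by simp
        then show False using gt by (simp add: c_def)
      qed
    qed
    define t where "t = Min (insert m (mu ` J))"
    have tgt: "c < t" unfolding t_def using mgt by (auto simp: J_def)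
    have "card J + 1 \<le> cnt t" by (rule cntJ) (auto simp: t_def)
    then have "t \<le> kth (card R + 1)" using JR by (intro upper) auto
    then show False using kr tgt by simp
  qed
  show ?thesis
  proof (intro exI conjI allI impI)
    show "W *v column j U = mu j *\<^sub>R column j U" for j by (rule eig)
    show "kth_eig W CARD('k) \<le> mu j" for j using muK by (simp add: K_def kth_def)
    show "kth_eig W (CARD('k)+1) \<le> kth_eig W CARD('k)" using KK by (simp add: K_def kth_def)
    fix x assume "\<forall>j. column j U \<bullet> x = 0"
    then have "x \<bullet> (W *v x) \<le> m * (x \<bullet> x)" using ray by blast
    also have "\<dots> \<le> c * (x \<bullet> x)" using mc by (simp add: mult_right_mono)
    finally show "x \<bullet> (W *v x) \<le> kth_eig W (CARD('k)+1) * (x \<bullet> x)" by (simp add: c_def K_def kth_def)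
  qed
qed

definition hfun :: "real \<Rightarrow> (real \<Rightarrow> real) \<Rightarrow> real \<Rightarrow> real^'n^'n \<Rightarrow> real^'n^'n \<Rightarrow> 'n \<Rightarrow> 'n \<Rightarrow> real \<Rightarrow> real" where
  "hfun lam g rho X Lam a b y = lam * g y + rho / 2 * (X$a$b - y)^2 + Lam$a$b * (X$a$b - y)"

lemma aug_sep:
  "aug_lag A lam g rho X M Lam = frob_norm_sq (A - X) + (\<Sum>a\<in>UNIV. \<Sum>b\<in>UNIV. hfun lam g rho X Lam a b (M$a$b))"
  unfolding aug_lag_def frob_norm_sq_def frob_inner_def hfun_def
  by (simp add: sum.distrib sum_distrib_left)

lemma sum2_upd:
  fixes h :: "'n::finite \<Rightarrow> 'n \<Rightarrow> real \<Rightarrow> real"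
  shows "(\<Sum>a\<in>UNIV. \<Sum>b\<in>UNIV. h a b ((\<chi> a b. if a = i \<and> b = j then y else M$a$b)$a$b))
       = (\<Sum>a\<in>UNIV. \<Sum>b\<in>UNIV. h a b (M$a$b)) - h i j (M$i$j) + h i j y"
proof -
  have e: "h a b ((\<chi> a b. if a = i \<and> b = j then y else M$a$b)$a$b)
      = h a b (M$a$b) + (if b = j then (if a = i then h i j y - h i j (M$i$j) else 0) else 0)" for a b
    by auto
  show ?thesis unfolding e by (simp add: sum.distrib)
qed

lemma tangent:
  assumes "in_class_G g gd l"
  shows "g y - g y0 \<ge> gd y0 * (y - y0)"
proof -
  have c: "convex_on UNIV g" and d: "(g has_real_derivative gd y0) (at y0)" using assms by (auto simp: in_class_G_def)
  show ?thesis by (rule convex_on_imp_above_tangent[OF c]) (use d in auto)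
qed

lemma h_ineq:
  fixes lam rho x Lm y y0 :: real
  assumes tan: "g y - g y0 \<ge> gd y0 * (y - y0)" and foc: "lam * gd y0 = Lm + rho * (x - y0)" and lam: "lam > 0"
  shows "(lam * g y + rho / 2 * (x - y)^2 + Lm * (x - y)) - (lam * g y0 + rho / 2 * (x - y0)^2 + Lm * (x - y0))
          \<ge> rho / 2 * (y - y0)^2"
proof -
  have "lam * (g y - g y0) \<ge> lam * (gd y0 * (y - y0))" using tan lam by (simp add: mult_left_mono)
  also have "lam * (gd y0 * (y - y0)) = (Lm + rho * (x - y0)) * (y - y0)" using foc by (simp add: mult_ac)
  finally have "lam * (g y - g y0) \<ge> (Lm + rho * (x - y0)) * (y - y0)" .
  moreover have "(lam * g y + rho / 2 * (x - y)^2 + Lm * (x - y)) - (lam * g y0 + rho / 2 * (x - y0)^2 + Lm * (x - y0))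
       - rho / 2 * (y - y0)^2 = lam * (g y - g y0) - (Lm + rho * (x - y0)) * (y - y0)"
    by (simp add: algebra_simps power2_eq_square)
  ultimately show ?thesis by linarith
qed

lemma foc_entry:
  fixes X Lm Ys :: "real^'n^'n"
  assumes G: "in_class_G g gd l"
    and min: "\<And>Y'. aug_lag A lam g rho X Ys Lm \<le> aug_lag A lam g rho X Y' Lm"
  shows "lam * gd (Ys$i$j) = Lm$i$j + rho * (X$i$j - Ys$i$j)"
proof -
  define h where "h = hfun lam g rho X Lm"
  have hmin: "h i j (Ys$i$j) \<le> h i j y" for y
  proof -
    define Yy where "Yy = (\<chi> a b. if a = i \<and> b = j then y else Ys$a$b)"
    have "aug_lag A lam g rho X Ys Lm \<le> aug_lag A lam g rho X Yy Lm" by (rule min)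
    then show ?thesis unfolding aug_sep Yy_def sum2_upd h_def by simp
  qed
  have dg: "\<And>x. (g has_real_derivative gd x) (at x)" using G by (auto simp: in_class_G_def)
  have "DERIV (h i j) (Ys$i$j) :> lam * gd (Ys$i$j) + rho / 2 * (2 * (X$i$j - Ys$i$j) * (-1)) + Lm$i$j * (-1)"
    unfolding h_def hfun_def
    by (auto intro!: derivative_eq_intros dg simp: field_simps)
  from DERIV_local_min[OF this zero_less_one] hmin
  have "lam * gd (Ys$i$j) + rho / 2 * (2 * (X$i$j - Ys$i$j) * (-1)) + Lm$i$j * (-1) = 0" by blast
  then show ?thesis by (simp add: algebra_simps)
qed

lemma delta2: fixes x :: "'k::finite" shows "(\<Sum>j\<in>UNIV. (if j = x then 1 else 0) * (if x = j then 1 else (0::real))) = 1"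
proof -
  have e: "(\<lambda>j. (if j = x then 1 else 0) * (if x = j then 1 else (0::real))) = (\<lambda>j. if j = x then 1 else 0)" by auto
  show ?thesis by (simp only: e) simp
qed

lemma projsq:
  fixes V :: "real^'k^'n"
  assumes "transpose V ** V = mat 1"
  shows "(V ** transpose V) \<bullet> (V ** transpose V) = real CARD('k)"
proof -
  have "(V ** transpose V) \<bullet> (V ** transpose V) = (\<Sum>i\<in>UNIV. column i V \<bullet> ((V ** transpose V) *v column i V))"
    by (rule inner_outer)
  also have "\<dots> = (\<Sum>i\<in>(UNIV::'k set). 1)"
    by (rule sum.cong[OF refl]) (simp add: outer_mv inner_sum_right orthD[OF assms] delta2)
  finally show ?thesis by simp
qed

lemma aug_proj:
  fixes V :: "real^'k^'n"
  assumes "transpose V ** V = mat 1"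
  shows "aug_lag A lam g rho (V ** transpose V) Y Lm = A \<bullet> A + real CARD('k) + lam * (\<Sum>i\<in>UNIV. \<Sum>j\<in>UNIV. g (Y$i$j))
     + rho / 2 * (real CARD('k) + Y \<bullet> Y) - Lm \<bullet> Y - (2 *\<^sub>R A + rho *\<^sub>R Y - Lm) \<bullet> (V ** transpose V)"
  unfolding aug_lag_def frob_norm_eq frob_inner_eq
  using projsq[OF assms]
  by (simp add: inner_diff_left inner_diff_right inner_add_left inner_commute algebra_simps)

lemma aug_cont:
  fixes Xf Yf Lf :: "nat \<Rightarrow> real^'n^'n"
  assumes "Xf \<longlonglongrightarrow> X0" "Yf \<longlonglongrightarrow> Y0" "Lf \<longlonglongrightarrow> L0" and gc: "\<And>x. isCont g x"
  shows "(\<lambda>j. aug_lag A lam g rho (Xf j) (Yf j) (Lf j)) \<longlonglongrightarrow> aug_lag A lam g rho X0 Y0 L0"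
proof -
  have s: "(\<lambda>j. g (Yf j $ a $ b)) \<longlonglongrightarrow> g (Y0 $ a $ b)" for a b
    by (rule isCont_tendsto_compose[OF gc]) (intro tendsto_vec_nth assms(2))
  show ?thesis unfolding aug_lag_def frob_norm_eq frob_inner_eq
    by (intro tendsto_intros assms s)
qed

lemma Gm_cont:
  fixes Yf :: "nat \<Rightarrow> real^'n^'n"
  assumes gc: "\<And>x. isCont gd x" and "Yf \<longlonglongrightarrow> Y0"
  shows "(\<lambda>j. (\<chi> a b. gd (Yf j $ a $ b))) \<longlonglongrightarrow> (\<chi> a b. gd (Y0 $ a $ b))"
proof (rule vec_tendstoI)
  fix a show "(\<lambda>j. (\<chi> a b. gd (Yf j $ a $ b)) $ a) \<longlonglongrightarrow> (\<chi> a b. gd (Y0 $ a $ b)) $ a"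
  proof (simp, rule vec_tendstoI)
    fix b show "(\<lambda>j. (\<chi> b. gd (Yf j $ a $ b)) $ b) \<longlonglongrightarrow> (\<chi> b. gd (Y0 $ a $ b)) $ b"
      by simp (rule isCont_tendsto_compose[OF gc], intro tendsto_vec_nth assms(2))
  qed
qed

lemma sym_iff: "transpose M = M \<longleftrightarrow> (\<forall>i j. M$i$j = M$j$(i::'n))" for M :: "real^'n^'n"
  by (auto simp: vec_eq_iff transpose_def)

lemma sym_limit:
  fixes Mf :: "nat \<Rightarrow> real^'n^'n"
  assumes "Mf \<longlonglongrightarrow> M0" "\<And>j. transpose (Mf j) = Mf j"
  shows "transpose M0 = M0"
proof -
  have "M0$i$j = M0$j$i" for i j
  proof -
    have "(\<lambda>k. Mf k $ i $ j) \<longlonglongrightarrow> M0 $ i $ j" by (intro tendsto_vec_nth assms(1))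
    moreover have "(\<lambda>k. Mf k $ i $ j) \<longlonglongrightarrow> M0 $ j $ i"
    proof -
      have "(\<lambda>k. Mf k $ j $ i) \<longlonglongrightarrow> M0 $ j $ i" by (intro tendsto_vec_nth assms(1))
      moreover have "Mf k $ j $ i = Mf k $ i $ j" for k using assms(2)[of k] unfolding sym_iff by metis
      ultimately show ?thesis by simp
    qed
    ultimately show ?thesis by (rule LIMSEQ_unique)
  qed
  then show ?thesis unfolding sym_iff by blast
qed

lemma mat_col: "((M::real^'n^'n) ** U) $ a $ j = (M *v column j (U::real^'k^'n)) $ a"
  unfolding matrix_matrix_mult_def matrix_vector_mult_def by (simp add: column_def)

theorem theorem1:
  fixes A :: "real^'n^'n"
    and lam l rho :: real
    and g gd :: "real \<Rightarrow> real"
    and X Y Lam :: "nat \<Rightarrow> real^'n^'n"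
    and Xs Ys Lams :: "real^'n^'n"
    and Us :: "real^'k^'n"
    and r :: "nat \<Rightarrow> nat"
  assumes A_sym: "sym_mat A"
    and K_lt_n: "CARD('k) < CARD('n)"
    and lam_pos: "lam > 0"
    and g_class: "in_class_G g gd l"
    and l_pos: "l > 0"
    and rho_def: "rho = 3 * lam * l"
    and Y0_sym: "sym_mat (Y 0)"
    and Lam0_sym: "sym_mat (Lam 0)"
    and X_step: "\<And>k. \<exists>Uh :: real^'k^'n.
                   top_eigvecs (2 *\<^sub>R A + rho *\<^sub>R Y k - Lam k) Uh \<and>
                   X (Suc k) = Uh ** transpose Uh"
    and Y_step: "\<And>k Y'. aug_lag A lam g rho (X (Suc k)) (Y (Suc k)) (Lam k)
                         \<le> aug_lag A lam g rho (X (Suc k)) Y' (Lam k)"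
    and Lam_step: "\<And>k. Lam (Suc k) = Lam k + rho *\<^sub>R (X (Suc k) - Y (Suc k))"
    and r_mono: "strict_mono r"
    and X_lim: "(\<lambda>k. X (r k)) \<longlonglongrightarrow> Xs"
    and Y_lim: "(\<lambda>k. Y (r k)) \<longlonglongrightarrow> Ys"
    and Lam_lim: "(\<lambda>k. Lam (r k)) \<longlonglongrightarrow> Lams"
    and gap: "kth_eig (2 *\<^sub>R A + rho *\<^sub>R Ys - Lams) CARD('k)
              > kth_eig (2 *\<^sub>R A + rho *\<^sub>R Ys - Lams) (CARD('k) + 1)"
    and Us_eig: "top_eigvecs (2 *\<^sub>R A + rho *\<^sub>R Ys - Lams) Us"
  shows "Xs = Ys \<and> Ys = Us ** transpose Us \<and>
         (\<exists>D :: real^'k^'k. diag_mat D \<and>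
            (2 *\<^sub>R A - lam *\<^sub>R (\<chi> i j. gd (Xs$i$j))) ** Us = Us ** D) \<and>
         transpose Us ** Us = mat 1"
proof -
  define K where "K = real CARD('k)"
  define Wf where "Wf k = 2 *\<^sub>R A + rho *\<^sub>R Y k - Lam k" for k
  define Gm where "Gm M = (\<chi> i j. gd (M$i$j))" for M :: "real^'n^'n"
  define L where "L k = aug_lag A lam g rho (X k) (Y k) (Lam k)" for k
  have ll: "lam * l > 0" using lam_pos l_pos by simp
  have rho_pos: "rho > 0" using ll rho_def by (simp add: mult.commute)
  have dg: "\<And>x. (g has_real_derivative gd x) (at x)" and gdc: "\<And>x. isCont gd x"
    and lip: "\<And>a b. \<bar>gd a - gd b\<bar> \<le> l * \<bar>a - b\<bar>"
    using g_class by (auto simp: in_class_G_def continuous_on_eq_continuous_at)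
  have gc: "\<And>x. isCont g x" using dg by (rule DERIV_isCont)
  obtain UU :: "nat \<Rightarrow> real^'k^'n" where UU: "\<And>k. top_eigvecs (Wf k) (UU k)" "\<And>k. X (Suc k) = UU k ** transpose (UU k)"
  proof -
    have "\<forall>k. \<exists>Uh :: real^'k^'n. top_eigvecs (Wf k) Uh \<and> X (Suc k) = Uh ** transpose Uh"
      using X_step by (simp add: Wf_def)
    then have "\<exists>UU :: nat \<Rightarrow> real^'k^'n. \<forall>k. top_eigvecs (Wf k) (UU k) \<and> X (Suc k) = UU k ** transpose (UU k)"
      by (rule choice)
    then show ?thesis using that by blast
  qed
  have oUU: "transpose (UU k) ** UU k = mat 1" for k using UU(1)[of k] by (simp add: top_eigvecs_def)
  have focY: "lam * gd (Y (Suc k)$i$j) = Lam k$i$j + rho * (X (Suc k)$i$j - Y (Suc k)$i$j)" for k i j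
    by (rule foc_entry[OF g_class Y_step])
  have E1: "Lam (Suc k)$i$j = lam * gd (Y (Suc k)$i$j)" for k i j
    using focY[of k i j] Lam_step[of k] by simp
  have uniq: "y1 = y2" if "lam * gd y1 + rho * y1 = lam * gd y2 + rho * y2" for y1 y2
  proof -
    have "rho * (y1 - y2) = lam * (gd y2 - gd y1)" using that by (simp add: algebra_simps)
    then have "\<bar>rho * (y1 - y2)\<bar> = \<bar>lam * (gd y2 - gd y1)\<bar>" by simp
    then have "rho * \<bar>y1 - y2\<bar> = lam * \<bar>gd y2 - gd y1\<bar>"
      using lam_pos rho_pos by (simp add: abs_mult)
    also have "\<dots> \<le> lam * (l * \<bar>y1 - y2\<bar>)" using lip[of y2 y1] lam_pos by (simp add: abs_minus_commute)
    finally have "(rho - lam * l) * \<bar>y1 - y2\<bar> \<le> 0" by (simp add: algebra_simps)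
    moreover have "rho - lam * l > 0" using ll rho_def by (simp add: mult.commute)
    ultimately show ?thesis by (simp add: mult_le_0_iff)
  qed
  have symk: "transpose (Y k) = Y k \<and> transpose (Lam k) = Lam k" for k
  proof (induction k)
    case 0 then show ?case using Y0_sym Lam0_sym by (simp add: sym_mat_def)
  next
    case (Suc k)
    have Xs': "X (Suc k) $ i $ j = X (Suc k) $ j $ i" for i j
      unfolding UU(2) outer_entry by (simp add: mult.commute)
    have Ls: "Lam k $ i $ j = Lam k $ j $ i" for i j using Suc.IH unfolding sym_iff by blast
    have Ys': "Y (Suc k) $ i $ j = Y (Suc k) $ j $ i" for i j
      by (rule uniq) (use focY[of k i j] focY[of k j i] Xs'[of i j] Ls[of i j] in \<open>simp add: algebra_simps\<close>)
    show ?case unfolding sym_iff using Ys' E1 by simp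
  qed
  have Wsymk: "transpose (Wf k) = Wf k" for k
    using symk[of k] A_sym unfolding sym_iff sym_mat_def Wf_def by simp
  have kyf: "Wf k \<bullet> (V ** transpose V) \<le> Wf k \<bullet> X (Suc k)" if oV: "transpose V ** V = mat 1" for k and V :: "real^'k^'n"
  proof -
    obtain mu where eig: "\<And>j. Wf k *v column j (UU k) = mu j *\<^sub>R column j (UU k)"
      and muK: "\<And>j. kth_eig (Wf k) CARD('k) \<le> mu j"
      and KK: "kth_eig (Wf k) (CARD('k)+1) \<le> kth_eig (Wf k) CARD('k)"
      and ray: "\<And>x. (\<forall>j. column j (UU k) \<bullet> x = 0) \<Longrightarrow> x \<bullet> (Wf k *v x) \<le> kth_eig (Wf k) (CARD('k)+1) * (x \<bullet> x)"
      using spectral[OF Wsymk UU(1) K_lt_n, of k] by blast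
    have "kth_eig (Wf k) (CARD('k)+1) + 0 \<le> mu j" for j using muK[of j] KK by simp
    from kyfan[OF Wsymk oUU oV eig ray this]
    show ?thesis unfolding UU(2) by simp
  qed
  have D1: "aug_lag A lam g rho (X (Suc (Suc m))) (Y (Suc m)) (Lam (Suc m)) \<le> L (Suc m)" for m
  proof -
    have "Wf (Suc m) \<bullet> X (Suc m) \<le> Wf (Suc m) \<bullet> X (Suc (Suc m))"
      using kyf[OF oUU[of m], of "Suc m"] unfolding UU(2) .
    then show ?thesis unfolding L_def UU(2) aug_proj[OF oUU] Wf_def by simp
  qed
  have D2: "aug_lag A lam g rho (X (Suc k)) (Y k) (Lam k) - aug_lag A lam g rho (X (Suc k)) (Y (Suc k)) (Lam k)
      \<ge> rho / 2 * ((Y k - Y (Suc k)) \<bullet> (Y k - Y (Suc k)))" for k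
  proof -
    have ent: "hfun lam g rho (X (Suc k)) (Lam k) a b (Y k $ a $ b) - hfun lam g rho (X (Suc k)) (Lam k) a b (Y (Suc k) $ a $ b)
        \<ge> rho / 2 * (Y k $ a $ b - Y (Suc k) $ a $ b)^2" for a b
      unfolding hfun_def by (rule h_ineq[where g=g and gd=gd, OF tangent[OF g_class, of "Y (Suc k) $ a $ b" "Y k $ a $ b"] focY[of k a b] lam_pos])
    have "rho / 2 * ((Y k - Y (Suc k)) \<bullet> (Y k - Y (Suc k)))
        = (\<Sum>a\<in>UNIV. \<Sum>b\<in>UNIV. rho / 2 * (Y k $ a $ b - Y (Suc k) $ a $ b)^2)"
      unfolding frob_norm_eq[symmetric] frob_norm_sq_def by (simp add: sum_distrib_left)
    also have "\<dots> \<le> (\<Sum>a\<in>UNIV. \<Sum>b\<in>UNIV. hfun lam g rho (X (Suc k)) (Lam k) a b (Y k $ a $ b) - hfun lam g rho (X (Suc k)) (Lam k) a b (Y (Suc k) $ a $ b))"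
      by (intro sum_mono ent)
    also have "\<dots> = aug_lag A lam g rho (X (Suc k)) (Y k) (Lam k) - aug_lag A lam g rho (X (Suc k)) (Y (Suc k)) (Lam k)"
      unfolding aug_sep by (simp add: sum_subtractf)
    finally show ?thesis .
  qed
  have D3: "L (Suc k) = aug_lag A lam g rho (X (Suc k)) (Y (Suc k)) (Lam k)
      + (1 / rho) * ((Lam (Suc k) - Lam k) \<bullet> (Lam (Suc k) - Lam k))" for k
  proof -
    define dL where "dL = Lam (Suc k) - Lam k"
    define D where "D = X (Suc k) - Y (Suc k)"
    have dL: "dL = rho *\<^sub>R D" unfolding dL_def D_def using Lam_step[of k] by (simp add: algebra_simps)
    have XY: "D = (1 / rho) *\<^sub>R dL" using rho_pos by (simp add: dL)
    have "Lam (Suc k) \<bullet> D = Lam k \<bullet> D + dL \<bullet> D" by (simp add: dL_def inner_diff_left)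
    also have "dL \<bullet> D = (1 / rho) * (dL \<bullet> dL)" unfolding XY by (simp only: inner_scaleR_right)
    finally have e: "Lam (Suc k) \<bullet> D = Lam k \<bullet> D + (1 / rho) * (dL \<bullet> dL)" .
    show ?thesis unfolding L_def aug_lag_def frob_inner_eq D_def[symmetric] e dL_def[symmetric] by simp
  qed
  have DL: "(Lam (Suc (Suc m)) - Lam (Suc m)) \<bullet> (Lam (Suc (Suc m)) - Lam (Suc m))
      \<le> (lam * l)^2 * ((Y (Suc (Suc m)) - Y (Suc m)) \<bullet> (Y (Suc (Suc m)) - Y (Suc m)))" for m
  proof -
    have ent: "(lam * gd u - lam * gd v)^2 \<le> (lam * l)^2 * (u - v)^2" for u v
    proof -
      have "\<bar>lam * gd u - lam * gd v\<bar> = lam * \<bar>gd u - gd v\<bar>"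
      proof -
        have "lam * gd u - lam * gd v = lam * (gd u - gd v)" by (simp add: right_diff_distrib)
        then show ?thesis using lam_pos by (simp add: abs_mult)
      qed
      also have "\<dots> \<le> lam * (l * \<bar>u - v\<bar>)" using lip[of u v] lam_pos by simp
      finally have "\<bar>lam * gd u - lam * gd v\<bar> \<le> \<bar>lam * l * (u - v)\<bar>"
        using lam_pos l_pos by (simp add: abs_mult)
      then have "\<bar>lam * gd u - lam * gd v\<bar>^2 \<le> \<bar>lam * l * (u - v)\<bar>^2"
        by (rule power_mono) simp
      then show ?thesis by (simp add: power_mult_distrib)
    qed
    show ?thesis unfolding frob_norm_eq[symmetric] frob_norm_sq_def
      by (simp add: E1 sum_distrib_left ent sum_mono)
  qed
  define kap where "kap = rho / 2 - (lam * l)^2 / rho"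
  have kap_pos: "kap > 0"
  proof -
    have "kap = 7 / 6 * (lam * l)" unfolding kap_def rho_def using ll by (simp add: field_simps power2_eq_square)
    then show ?thesis using ll by simp
  qed
  have DEC: "L (Suc (Suc m)) + kap * ((Y (Suc (Suc m)) - Y (Suc m)) \<bullet> (Y (Suc (Suc m)) - Y (Suc m))) \<le> L (Suc m)" for m
  proof -
    define dY where "dY = (Y (Suc (Suc m)) - Y (Suc m)) \<bullet> (Y (Suc (Suc m)) - Y (Suc m))"
    have dY': "(Y (Suc m) - Y (Suc (Suc m))) \<bullet> (Y (Suc m) - Y (Suc (Suc m))) = dY"
      unfolding dY_def by (simp add: inner_diff_left inner_diff_right inner_commute)
    have a: "(1 / rho) * ((Lam (Suc (Suc m)) - Lam (Suc m)) \<bullet> (Lam (Suc (Suc m)) - Lam (Suc m))) \<le> (1 / rho) * ((lam * l)^2 * dY)"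
      using DL[of m] rho_pos unfolding dY_def by (simp add: divide_right_mono)
    have "L (Suc (Suc m)) \<le> aug_lag A lam g rho (X (Suc (Suc m))) (Y (Suc (Suc m))) (Lam (Suc m)) + (1 / rho) * ((lam * l)^2 * dY)"
      using D3[of "Suc m"] a by linarith
    also have "\<dots> \<le> aug_lag A lam g rho (X (Suc (Suc m))) (Y (Suc m)) (Lam (Suc m)) - rho / 2 * dY + (1 / rho) * ((lam * l)^2 * dY)"
      using D2[of "Suc m", unfolded dY'] by linarith
    also have "\<dots> \<le> L (Suc m) - rho / 2 * dY + (1 / rho) * ((lam * l)^2 * dY)"
      using D1[of m] by linarith
    also have "\<dots> = L (Suc m) - kap * dY" unfolding kap_def by (simp add: algebra_simps)
    finally show ?thesis unfolding dY_def by linarith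
  qed
  have kap_nn: "0 \<le> kap * ((Y (Suc (Suc m)) - Y (Suc m)) \<bullet> (Y (Suc (Suc m)) - Y (Suc m)))" for m
    using kap_pos by (intro mult_nonneg_nonneg) (simp_all only: inner_ge_zero less_imp_le)
  have Lstep: "L (Suc n) \<le> L n" if n1: "1 \<le> n" for n
  proof -
    obtain m where "n = Suc m" using n1 by (cases n) auto
    then show ?thesis using DEC[of m] kap_nn[of m] by simp
  qed
  have Lmono: "L n \<le> L m" if m1: "1 \<le> m" and mn: "m \<le> n" for m n
    using mn
  proof (induction n rule: dec_induct)
    case base then show ?case by simp
  next
    case (step n) then show ?case using Lstep[of n] m1 by simp
  qed
  define Lst where "Lst = aug_lag A lam g rho Xs Ys Lams"
  have Lr: "(\<lambda>j. L (r j)) \<longlonglongrightarrow> Lst" unfolding L_def Lst_def by (rule aug_cont[OF X_lim Y_lim Lam_lim gc])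
  have Lbound: "Lst \<le> L m" if m1: "1 \<le> m" for m
  proof (rule LIMSEQ_le_const2[OF Lr], intro exI allI impI)
    fix n assume "m \<le> n"
    then have "m \<le> r n" using seq_suble[OF r_mono, of n] by simp
    then show "L (r n) \<le> L m" using Lmono m1 by blast
  qed
  define dY where "dY n = (Y (Suc (Suc n)) - Y (Suc n)) \<bullet> (Y (Suc (Suc n)) - Y (Suc n))" for n
  have tel: "(\<Sum>i<N. kap * dY i) \<le> L 1 - L (Suc N)" for N
  proof (induction N)
    case 0 then show ?case by simp
  next
    case (Suc N) then show ?case using DEC[of N] unfolding dY_def by simp
  qed
  have dY_nn: "0 \<le> dY n" for n unfolding dY_def by simp
  have "summable dY"
  proof (rule summableI_nonneg_bounded[OF dY_nn])
    fix N
    have "kap * (\<Sum>i<N. dY i) \<le> L 1 - Lst" using tel[of N] Lbound[of "Suc N"] by (simp add: sum_distrib_left)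
    then show "(\<Sum>i<N. dY i) \<le> (L 1 - Lst) / kap" using kap_pos by (simp add: field_simps)
  qed
  then have dY0: "dY \<longlonglongrightarrow> 0" by (rule summable_LIMSEQ_zero)
  define DY where "DY n = Y (Suc n) - Y n" for n
  have nDY: "norm (DY (Suc n)) = sqrt (dY n)" for n unfolding DY_def dY_def by (simp add: norm_eq_sqrt_inner)
  have nDY0: "(\<lambda>n. norm (DY (Suc n))) \<longlonglongrightarrow> 0" unfolding nDY using tendsto_real_sqrt[OF dY0] by simp
  then have "(\<lambda>n. DY (Suc n)) \<longlonglongrightarrow> 0" by (rule tendsto_norm_zero_cancel)
  then have DY0: "DY \<longlonglongrightarrow> 0" by (rule filterlim_sequentially_Suc[THEN iffD1])
  define EL where "EL n = Lam (Suc n) - Lam n" for n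
  have nEL: "norm (EL (Suc n)) \<le> lam * l * norm (DY (Suc n))" for n
  proof (rule power2_le_imp_le)
    show "(norm (EL (Suc n)))^2 \<le> (lam * l * norm (DY (Suc n)))^2"
    proof -
      have e1: "(norm (EL (Suc n)))^2 = EL (Suc n) \<bullet> EL (Suc n)" by (rule power2_norm_eq_inner)
      have e2: "(lam * l * norm (DY (Suc n)))^2 = (lam * l)^2 * (DY (Suc n) \<bullet> DY (Suc n))"
        by (simp only: power_mult_distrib power2_norm_eq_inner)
      show ?thesis unfolding e1 e2 using DL[of n] unfolding EL_def DY_def .
    qed
    show "0 \<le> lam * l * norm (DY (Suc n))" using ll by simp
  qed
  have "(\<lambda>n. lam * l * norm (DY (Suc n))) \<longlonglongrightarrow> 0"
    by (rule tendsto_mult_right_zero[OF nDY0])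
  then have "(\<lambda>n. EL (Suc n)) \<longlonglongrightarrow> 0" by (rule Lim_null_comparison[OF always_eventually[OF allI[OF nEL]]])
  then have EL0: "EL \<longlonglongrightarrow> 0" by (rule filterlim_sequentially_Suc[THEN iffD1])
  define FXY where "FXY n = X n - Y n" for n
  have FXY1: "FXY (Suc n) = (1 / rho) *\<^sub>R EL n" for n
    unfolding FXY_def EL_def using Lam_step[of n] rho_pos by simp
  have "(\<lambda>n. FXY (Suc n)) \<longlonglongrightarrow> 0"
    unfolding FXY1 using tendsto_scaleR[OF tendsto_const EL0, of "1/rho"] by simp
  then have FXY0: "FXY \<longlonglongrightarrow> 0" by (rule filterlim_sequentially_Suc[THEN iffD1])
  have sub: "(\<lambda>j. f (r j)) \<longlonglongrightarrow> 0" if "f \<longlonglongrightarrow> 0" for f :: "nat \<Rightarrow> real^'n^'n"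
    using LIMSEQ_subseq_LIMSEQ[OF that r_mono] by (simp add: o_def)
  have XsYs: "Xs = Ys"
  proof -
    have "(\<lambda>j. FXY (r j)) \<longlonglongrightarrow> Xs - Ys" unfolding FXY_def by (intro tendsto_intros X_lim Y_lim)
    from LIMSEQ_unique[OF this sub[OF FXY0]] show ?thesis by simp
  qed
  have Y1: "(\<lambda>j. Y (Suc (r j))) \<longlonglongrightarrow> Ys"
    using tendsto_add[OF Y_lim sub[OF DY0]] by (simp add: DY_def)
  have Lam1: "(\<lambda>j. Lam (Suc (r j))) \<longlonglongrightarrow> Lams"
    using tendsto_add[OF Lam_lim sub[OF EL0]] by (simp add: EL_def)
  have X1: "(\<lambda>j. X (Suc (r j))) \<longlonglongrightarrow> Ys"
    using tendsto_add[OF Y1 sub[OF filterlim_sequentially_Suc[THEN iffD2, OF FXY0]]] by (simp add: FXY_def)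
  have LamG: "Lams = lam *\<^sub>R Gm Ys"
  proof -
    have "Lam (Suc k) = lam *\<^sub>R Gm (Y (Suc k))" for k by (simp add: vec_eq_iff Gm_def E1)
    then have "(\<lambda>j. Lam (Suc (r j))) \<longlonglongrightarrow> lam *\<^sub>R Gm Ys"
      using tendsto_scaleR[OF tendsto_const Gm_cont[OF gdc Y1], of lam] by (simp add: Gm_def)
    from LIMSEQ_unique[OF Lam1 this] show ?thesis .
  qed
  define Ws where "Ws = 2 *\<^sub>R A + rho *\<^sub>R Ys - Lams"
  define Ps where "Ps = Us ** transpose Us"
  have oUs: "transpose Us ** Us = mat 1" using Us_eig by (simp add: top_eigvecs_def)
  have Wr: "(\<lambda>j. Wf (r j)) \<longlonglongrightarrow> Ws" unfolding Wf_def Ws_def by (intro tendsto_intros Y_lim Lam_lim)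
  have Wssym: "transpose Ws = Ws" by (rule sym_limit[OF Wr Wsymk])
  have ky1: "Ws \<bullet> Ps \<le> Ws \<bullet> Ys"
  proof (rule LIMSEQ_le)
    show "(\<lambda>j. Wf (r j) \<bullet> Ps) \<longlonglongrightarrow> Ws \<bullet> Ps" by (intro tendsto_intros Wr)
    show "(\<lambda>j. Wf (r j) \<bullet> X (Suc (r j))) \<longlonglongrightarrow> Ws \<bullet> Ys" by (intro tendsto_intros Wr X1)
    show "\<exists>N. \<forall>n\<ge>N. Wf (r n) \<bullet> Ps \<le> Wf (r n) \<bullet> X (Suc (r n))"
      unfolding Ps_def using kyf[OF oUs] by blast
  qed
  obtain mu where eig: "\<And>j. Ws *v column j Us = mu j *\<^sub>R column j Us"
    and muK: "\<And>j. kth_eig Ws CARD('k) \<le> mu j"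
    and ray: "\<And>x. (\<forall>j. column j Us \<bullet> x = 0) \<Longrightarrow> x \<bullet> (Ws *v x) \<le> kth_eig Ws (CARD('k)+1) * (x \<bullet> x)"
    using spectral[OF Wssym Us_eig[folded Ws_def] K_lt_n] by blast
  define del where "del = kth_eig Ws CARD('k) - kth_eig Ws (CARD('k)+1)"
  have del_pos: "del > 0" using gap unfolding del_def Ws_def by simp
  have dle: "kth_eig Ws (CARD('k)+1) + del \<le> mu j" for j using muK[of j] by (simp add: del_def)
  have ky2: "Ws \<bullet> Ys + del * (K - Ps \<bullet> Ys) \<le> Ws \<bullet> Ps"
  proof (rule LIMSEQ_le_const2)
    show "(\<lambda>j. Ws \<bullet> X (Suc (r j)) + del * (K - Ps \<bullet> X (Suc (r j)))) \<longlonglongrightarrow> Ws \<bullet> Ys + del * (K - Ps \<bullet> Ys)"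
      by (intro tendsto_intros X1)
    show "\<exists>N. \<forall>n\<ge>N. Ws \<bullet> X (Suc (r n)) + del * (K - Ps \<bullet> X (Suc (r n))) \<le> Ws \<bullet> Ps"
      unfolding Ps_def K_def UU(2) using kyfan[OF Wssym oUs oUU eig ray dle] by blast
  qed
  have PY: "K \<le> Ps \<bullet> Ys"
  proof -
    have "del * (K - Ps \<bullet> Ys) \<le> 0" using ky1 ky2 by linarith
    then have "K - Ps \<bullet> Ys \<le> 0" using del_pos by (simp add: mult_le_0_iff)
    then show ?thesis by simp
  qed
  have YY: "Ys \<bullet> Ys = K"
  proof -
    have "(\<lambda>j. X (Suc (r j)) \<bullet> X (Suc (r j))) \<longlonglongrightarrow> Ys \<bullet> Ys" by (intro tendsto_intros X1)
    moreover have "X (Suc (r j)) \<bullet> X (Suc (r j)) = K" for j unfolding UU(2) K_def by (rule projsq[OF oUU])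
    ultimately show ?thesis using LIMSEQ_unique tendsto_const by fastforce
  qed
  have PP: "Ps \<bullet> Ps = K" unfolding Ps_def K_def by (rule projsq[OF oUs])
  have YsPs: "Ys = Ps"
  proof -
    have "(Ys - Ps) \<bullet> (Ys - Ps) = Ys \<bullet> Ys - 2 * (Ps \<bullet> Ys) + Ps \<bullet> Ps"
      by (simp add: inner_diff_left inner_diff_right inner_commute)
    also have "\<dots> \<le> 0" using YY PP PY by simp
    finally have "(Ys - Ps) \<bullet> (Ys - Ps) \<le> 0" .
    then have "Ys - Ps = 0" by (meson inner_gt_zero_iff not_le)
    then show ?thesis by simp
  qed
  define D :: "real^'k^'k" where "D = (\<chi> i j. if i = j then mu j - rho else 0)"
  have diagD: "diag_mat D" by (simp add: diag_mat_def D_def)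
  have Pcol: "Ps *v column j Us = column j Us" for j
  proof -
    have "Ps *v column j Us = (\<Sum>t\<in>UNIV. (if t = j then 1 else 0) *\<^sub>R column t Us)"
      unfolding Ps_def outer_mv by (simp add: orthD[OF oUs])
    also have "(\<lambda>t. (if t = j then 1 else 0) *\<^sub>R column t Us) = (\<lambda>t. if t = j then column t Us else 0)"
      by auto
    also have "(\<Sum>t\<in>UNIV. (if t = j then column t Us else 0)) = column j Us" by simp
    finally show ?thesis .
  qed
  have M: "2 *\<^sub>R A - lam *\<^sub>R (\<chi> i j. gd (Xs$i$j)) = Ws - rho *\<^sub>R Ps"
    using LamG XsYs YsPs by (simp add: Ws_def Gm_def)
  have KKT: "(2 *\<^sub>R A - lam *\<^sub>R (\<chi> i j. gd (Xs$i$j))) ** Us = Us ** D"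
  proof -
    have "((Ws - rho *\<^sub>R Ps) ** Us) $ a $ j = (Us ** D) $ a $ j" for a j
    proof -
      have "((Ws - rho *\<^sub>R Ps) ** Us) $ a $ j = ((Ws - rho *\<^sub>R Ps) *v column j Us) $ a" by (rule mat_col)
      also have "(Ws - rho *\<^sub>R Ps) *v column j Us = Ws *v column j Us - rho *\<^sub>R (Ps *v column j Us)"
        by (simp add: matrix_vector_mult_diff_rdistrib scaleR_matrix_vector_assoc)
      also have "\<dots> = mu j *\<^sub>R column j Us - rho *\<^sub>R column j Us" by (simp only: eig Pcol)
      also have "(mu j *\<^sub>R column j Us - rho *\<^sub>R column j Us) $ a = (mu j - rho) * Us $ a $ j"
        by (simp add: column_def algebra_simps)
      also have "\<dots> = (Us ** D) $ a $ j"
        unfolding matrix_matrix_mult_def D_def by (simp add: if_distrib cong: if_cong)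
      finally show ?thesis .
    qed
    then show ?thesis unfolding M by (simp add: vec_eq_iff)
  qed
  show ?thesis using XsYs YsPs diagD KKT oUs unfolding Ps_def by blast
qed

end
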